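(* Let $\gamma=(\gamma_1,\dots,\gamma_b)$ be a parallel map on $V=V_1\oplus\cdots\oplus V_b$, $V_i\cong(\mathbb F_2)^m$ with $m\ge4$, and $0\gamma=0$. Suppose every $\gamma_i$ is differentially $4$-uniform and satisfies $\hat n(\gamma_i)=0$. If $\gamma$ maps $\mathcal{LA}_U(W_1|W_2)$ onto a non-trivial partition $\mathcal L(W)$, then $W$ and $W_1$ are walls and $W=W_1=W_2$; in particular $\mathcal{LA}_U(W_1|W_2)$ is linear.
   Context: Let $b>1$, $n=mb$, $V=(\mathbb F_2)^n=V_1\oplus\cdots\oplus V_b$, $V_i\cong(\mathbb F_2)^m$. Permutations act on the right. A parallel map is $\gamma\in\mathrm{Sym}(V)$ with $(v_1\oplus\cdots\oplus v_b)\gamma=v_1\gamma_1\oplus\cdots\oplus v_b\gamma_b$, $\gamma_i\in\mathrm{Sym}(V_i)$. A wall is $\bigoplus_{i\in I}V_i$ with $\emptyset\ne I\subsetneq\{1,\dots,b\}$. For $f:(\mathbb F_2)^m\to(\mathbb F_2)^m$, $\hat f_a(x)=f(x+a)+f(x)$; $f$ is differentially $\delta$-uniform if $\delta=\max_{a\ne0,b}|\{x:\hat f_a(x)=b\}|$; and $\hat n(f)=\max_{a\ne0}|\{v\ne0: x\mapsto\langle\hat f_a(x),v\rangle \text{ is constant}\}|$ with $\langle\cdot,\cdot\rangle$ the standard dot product. A permutation maps $\mathcal A$ onto $\mathcal B$ if it sends the blocks of $\mathcal A$ exactly onto those of $\mathcal B$; trivial partitions are the singleton partition and $\{V\}$.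 $\mathcal L(W)=\{W+v:v\in V\}$. For a subspace $U$ of dimension $n-1$ and subspaces $W_1,W_2\subseteq U$, $\mathcal{LA}_U(W_1|W_2)=\{W_1+v:v\in U\}\cup\{(W_2+\bar v)+v:v\in U\}$ for any $\bar v\in V\setminus U$. *)

theory Defs
  imports "HOL-Analysis.Analysis" "HOL-Library.Z2"
begin

instance bit :: finite
proof
  have "UNIV = {0::bit, 1}" by (auto intro: bit_not_zero_iff)
  then show "finite (UNIV :: bit set)" by (metis finite.emptyI finite.insertI)
qed

(* V_i = (F_2)^m  is  bit^'m  (m = CARD('m)),
   V = V_1 + ... + V_b  is  (bit^'m)^'b  (b = CARD('b)); block i of v is v$i. *)

definition parallel_map :: "('b \<Rightarrow> (bit^'m \<Rightarrow> bit^'m)) \<Rightarrow> (bit^'m)^'b \<Rightarrow> (bit^'m)^'b" where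
  "parallel_map g v = (\<chi> i. g i (v $ i))"

definition F2_subspace :: "'a::ab_group_add set \<Rightarrow> bool" where
  "F2_subspace W \<longleftrightarrow> 0 \<in> W \<and> (\<forall>x\<in>W. \<forall>y\<in>W. x + y \<in> W)"

definition is_wall :: "((bit^'m)^'b) set \<Rightarrow> bool" where
  "is_wall W \<longleftrightarrow> (\<exists>I. I \<noteq> {} \<and> I \<noteq> UNIV \<and> W = {v. \<forall>i. i \<notin> I \<longrightarrow> v $ i = 0})"

definition coset :: "'a::ab_group_add set \<Rightarrow> 'a \<Rightarrow> 'a set" where
  "coset W v = (\<lambda>w. w + v) ` W"

definition Lpart :: "'a::ab_group_add set \<Rightarrow> 'a set set" where
  "Lpart W = {coset W v | v. True}"

definition LApart :: "'a::ab_group_add set \<Rightarrow> 'a set \<Rightarrow> 'a set \<Rightarrow> 'a set set" where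
  "LApart U W1 W2 =
     (let vbar = (SOME x. x \<notin> U) in
       {coset W1 v | v. v \<in> U} \<union> {coset W2 (vbar + v) | v. v \<in> U})"

definition linear_partition :: "'a::ab_group_add set set \<Rightarrow> bool" where
  "linear_partition P \<longleftrightarrow> (\<exists>W. F2_subspace W \<and> P = Lpart W)"

definition trivial_partition :: "'a set set \<Rightarrow> bool" where
  "trivial_partition P \<longleftrightarrow> P = {{x} | x. True} \<or> P = {UNIV}"

definition maps_onto :: "('a \<Rightarrow> 'a) \<Rightarrow> 'a set set \<Rightarrow> 'a set set \<Rightarrow> bool" where
  "maps_onto g A B \<longleftrightarrow> (\<lambda>X. g ` X) ` A = B"

definition dot :: "bit^'m \<Rightarrow> bit^'m \<Rightarrow> bit" where
  "dot x y = (\<Sum>j\<in>UNIV. x $ j * y $ j)"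

definition dderiv :: "(bit^'m \<Rightarrow> bit^'m) \<Rightarrow> bit^'m \<Rightarrow> bit^'m \<Rightarrow> bit^'m" where
  "dderiv f a x = f (x + a) + f x"

definition diff_uniformity :: "(bit^'m \<Rightarrow> bit^'m) \<Rightarrow> nat" where
  "diff_uniformity f = Max {card {x. dderiv f a x = c} | a c. a \<noteq> 0}"

definition diff_uniform :: "(bit^'m \<Rightarrow> bit^'m) \<Rightarrow> nat \<Rightarrow> bool" where
  "diff_uniform f \<delta> \<longleftrightarrow> \<delta> = diff_uniformity f"

definition nhat :: "(bit^'m \<Rightarrow> bit^'m) \<Rightarrow> nat" where
  "nhat f = Max {card {v. v \<noteq> 0 \<and> (\<exists>k. \<forall>x. dot (dderiv f a x) v = k)} | a. a \<noteq> 0}"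

end

theory Submission
  imports Defs
begin

lemma bit_add_self[simp]: "(x::bit) + x = 0" by (cases x) auto
lemma vec_add_self[simp]: "(x::bit^'m) + x = 0" by (simp add: vec_eq_iff)
lemma vec2_add_self[simp]: "(x::(bit^'m)^'b) + x = 0" by (simp add: vec_eq_iff)
lemma vec_add_self2[simp]: "(x::bit^'m) + (x + y) = y" by (simp add: add.assoc[symmetric])
lemma vec2_add_self2[simp]: "(x::(bit^'m)^'b) + (x + y) = y" by (simp add: add.assoc[symmetric])

lemma card_bit: "CARD(bit) = 2"
proof -
  have "(UNIV::bit set) = {0,1}" by (auto intro: bit_not_zero_iff)
  moreover have "card {0::bit,1} = 2" by simp
  ultimately show ?thesis by simp
qed

lemma card_vecbit: "CARD(bit^'m::finite) = 2 ^ CARD('m)" by (simp add: card_bit)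

lemma sub_add: "F2_subspace S \<Longrightarrow> x \<in> S \<Longrightarrow> y \<in> S \<Longrightarrow> x + y \<in> S"
  by (simp add: F2_subspace_def)
lemma sub_zero: "F2_subspace S \<Longrightarrow> 0 \<in> S"
  by (simp add: F2_subspace_def)

lemma card_transl: "card ((\<lambda>w. w + c) ` (S::'a::ab_group_add set)) = card S"
  by (rule card_image) (simp add: inj_on_def)

lemma half_sub:
  fixes S :: "'a::{ab_group_add,finite} set"
  assumes char2: "\<And>x::'a. x + x = 0" and S: "F2_subspace S"
    and c: "2 * card S = CARD('a)" and u: "u \<notin> S" and u': "u' \<notin> S"
  shows "u + u' \<in> S"
proof -
  have disj: "S \<inter> (\<lambda>w. w + u) ` S = {}"
  proof (rule ccontr)
    assume "S \<inter> (\<lambda>w. w + u) ` S \<noteq> {}"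
    then obtain w where w: "w \<in> S" "w + u \<in> S" by auto
    have eq: "w + (w + u) = u" by (simp add: add.assoc[symmetric] char2)
    have "u \<in> S" using sub_add[OF S w] by (simp only: eq)
    then show False using u by simp
  qed
  have cc: "card (S \<union> (\<lambda>w. w + u) ` S) = CARD('a)"
    using card_Un_disjoint[OF _ _ disj] card_transl[of u S] c by simp
  have "S \<union> (\<lambda>w. w + u) ` S = UNIV"
    by (rule card_subset_eq[OF finite subset_UNIV cc])
  then have "u' \<in> (\<lambda>w. w + u) ` S" using u' by blast
  then obtain w where w: "w \<in> S" "u' = w + u" by auto
  have "u + u' = w + (u + u)" using w(2) by (simp add: add_ac)
  then have "u + u' = w" by (simp add: char2)
  then show ?thesis using w(1) by simp
qed

lemma big_sub:
  fixes S :: "'a::{ab_group_add,finite} set"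
  assumes char2: "\<And>x::'a. x + x = 0" and S: "F2_subspace S"
    and c: "CARD('a) < 2 * card S"
  shows "S = UNIV"
proof -
  { fix z :: 'a
    have "S \<inter> (\<lambda>w. w + z) ` S \<noteq> {}"
    proof
      assume disj: "S \<inter> (\<lambda>w. w + z) ` S = {}"
      have "card (S \<union> (\<lambda>w. w + z) ` S) = 2 * card S"
        using card_Un_disjoint[OF _ _ disj] card_transl[of z S] by simp
      moreover have "card (S \<union> (\<lambda>w. w + z) ` S) \<le> CARD('a)" by (rule card_mono) auto
      ultimately show False using c by simp
    qed
    then obtain w where w: "w \<in> S" "w + z \<in> S" by auto
    have eq: "w + (w + z) = z" by (simp add: add.assoc[symmetric] char2)
    have "z \<in> S" using sub_add[OF S w] by (simp only: eq) }
  then show ?thesis by auto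
qed

lemma bit_cases2: "(x::bit) = 0 \<or> x = 1" by (cases x) auto

lemma vec_decomp: "(x::bit^'m::finite) = (\<Sum>j\<in>{j. x$j = 1}. axis j 1)"
proof (subst vec_eq_iff, intro allI)
  fix k
  have "(\<Sum>j\<in>{j. x$j = 1}. axis j (1::bit)) $ k = (\<Sum>j\<in>{j. x$j = 1}. (axis j (1::bit)) $ k)"
    by (rule sum_component)
  also have "\<dots> = (\<Sum>j\<in>{j. x$j = 1}. if j = k then 1 else 0)"
    by (rule sum.cong) (auto simp: axis_def)
  also have "\<dots> = x $ k" using bit_cases2[of "x$k"] by (auto simp: sum.delta)
  finally show "x $ k = (\<Sum>j\<in>{j. x$j = 1}. axis j (1::bit)) $ k" by simp
qed

lemma additive_sum:
  fixes phi :: "bit^'m::finite \<Rightarrow> bit"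
  assumes add: "\<And>x y. phi (x + y) = phi x + phi y"
  shows "finite J \<Longrightarrow> phi (\<Sum>j\<in>J. f j) = (\<Sum>j\<in>J. phi (f j))"
proof (induction J rule: finite_induct)
  case empty
  have "phi 0 = phi 0 + phi 0" using add[of 0 0] by simp
  then show ?case by simp
next
  case (insert a F)
  then show ?case by (simp add: add)
qed

lemma hyper:
  fixes A :: "(bit^'m::finite) set"
  assumes A: "F2_subspace A" and nU: "A \<noteq> UNIV" and c: "CARD(bit^'m) < 4 * card A"
  shows "\<exists>v. v \<noteq> 0 \<and> (\<forall>y\<in>A. dot y v = 0)"
proof -
  obtain y0 where y0: "y0 \<notin> A" using nU by auto
  define B where "B = A \<union> (\<lambda>w. w + y0) ` A"
  have disj: "A \<inter> (\<lambda>w. w + y0) ` A = {}"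
  proof (rule ccontr)
    assume "A \<inter> (\<lambda>w. w + y0) ` A \<noteq> {}"
    then obtain w where w: "w \<in> A" "w + y0 \<in> A" by auto
    have "y0 \<in> A" using sub_add[OF A w] by simp
    then show False using y0 by simp
  qed
  have cB: "card B = 2 * card A"
    unfolding B_def using card_Un_disjoint[OF _ _ disj] card_transl[of y0 A] by simp
  have sB: "F2_subspace B"
    unfolding F2_subspace_def
  proof (intro conjI ballI)
    show "0 \<in> B" using sub_zero[OF A] unfolding B_def by simp
  next
    fix x y assume x: "x \<in> B" and y: "y \<in> B"
    show "x + y \<in> B"
    proof (cases "x \<in> A")
      case xA: True
      show ?thesis
      proof (cases "y \<in> A")
        case True then show ?thesis using sub_add[OF A xA] unfolding B_def by simp
      next
        case False
        then obtain q where q: "q \<in> A" "y = q + y0" using y unfolding B_def by auto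
        have "x + y = (x + q) + y0" using q by (simp add: add.assoc)
        then show ?thesis using sub_add[OF A xA q(1)] unfolding B_def by blast
      qed
    next
      case False
      then obtain p where p: "p \<in> A" "x = p + y0" using x unfolding B_def by auto
      show ?thesis
      proof (cases "y \<in> A")
        case True
        have "x + y = (p + y) + y0" using p by (simp add: algebra_simps)
        then show ?thesis using sub_add[OF A p(1) True] unfolding B_def by blast
      next
        case False
        then obtain q where q: "q \<in> A" "y = q + y0" using y unfolding B_def by auto
        have "x + y = p + q" using p q by (simp add: algebra_simps)
        then show ?thesis using sub_add[OF A p(1) q(1)] unfolding B_def by simp
      qed
    qed
  qed
  have BU: "B = UNIV"
    by (rule big_sub[OF _ sB]) (use c cB in auto)
  define phi where "phi x = (if x \<in> A then 0 else (1::bit))" for x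
  have padd: "phi (x + y) = phi x + phi y" for x y
  proof (cases "x \<in> A")
    case xA: True
    show ?thesis
    proof (cases "y \<in> A")
      case True then show ?thesis using sub_add[OF A xA True] xA unfolding phi_def by simp
    next
      case False
      have "x + y \<notin> A"
      proof
        assume "x + y \<in> A"
        then have "x + (x + y) \<in> A" using sub_add[OF A xA] by blast
        then show False using False by simp
      qed
      then show ?thesis using xA False unfolding phi_def by simp
    qed
  next
    case xA: False
    show ?thesis
    proof (cases "y \<in> A")
      case True
      have "x + y \<notin> A"
      proof
        assume xy: "x + y \<in> A"
        have "(x + y) + y \<in> A" using sub_add[OF A xy True] .
        then show False using xA by (simp add: add.assoc)
      qed
      then show ?thesis using xA True unfolding phi_def by simp
    next
      case False
      obtain p where p: "p \<in> A" "x = p + y0" using xA BU unfolding B_def by (metis UNIV_I UnE imageE)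
      obtain q where q: "q \<in> A" "y = q + y0" using False BU unfolding B_def by (metis UNIV_I UnE imageE)
      have "x + y = p + q" using p q by (simp add: algebra_simps)
      then have "x + y \<in> A" using sub_add[OF A p(1) q(1)] by simp
      then show ?thesis using xA False unfolding phi_def by simp
    qed
  qed
  define v where "v = (\<chi> j. phi (axis j 1))"
  have dv: "dot x v = phi x" for x
  proof -
    have "phi x = phi (\<Sum>j\<in>{j. x$j = 1}. axis j 1)" by (subst vec_decomp[of x]) simp
    also have "\<dots> = (\<Sum>j\<in>{j. x$j = 1}. phi (axis j 1))" by (rule additive_sum[OF padd]) simp
    also have "\<dots> = (\<Sum>j\<in>UNIV. x $ j * v $ j)"
    proof -
      have "(\<Sum>j\<in>UNIV. x $ j * v $ j) = (\<Sum>j\<in>{j. x$j = 1}. x $ j * v $ j)"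
        by (rule sum.mono_neutral_right) auto
      also have "\<dots> = (\<Sum>j\<in>{j. x$j = 1}. phi (axis j 1))" by (rule sum.cong) (auto simp: v_def)
      finally show ?thesis by simp
    qed
    finally show ?thesis unfolding dot_def by simp
  qed
  have "v \<noteq> 0"
  proof
    assume "v = 0"
    then have "dot y0 v = 0" unfolding dot_def by simp
    then show False using dv[of y0] y0 unfolding phi_def by simp
  qed
  moreover have "\<forall>y\<in>A. dot y v = 0" using dv unfolding phi_def by simp
  ultimately show ?thesis by blast
qed

definition emb :: "'b \<Rightarrow> bit^'m \<Rightarrow> (bit^'m)^'b" where
  "emb i s = (\<chi> j. if j = i then s else 0)"

lemma vec_eqI': "(\<And>i. x $ i = y $ i) \<Longrightarrow> x = y" by (simp add: vec_eq_iff)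

lemma emb_nth[simp]: "emb i s $ j = (if j = i then s else 0)" by (simp add: emb_def)
lemma emb_add: "emb i (s + t) = emb i s + emb i t" by (simp add: vec_eq_iff)
lemma emb_zero[simp]: "emb i 0 = 0" by (simp add: vec_eq_iff)
lemma emb_inj: "emb i s = emb i t \<Longrightarrow> s = t" by (metis emb_nth)
lemma emb_eq0[simp]: "emb i s = 0 \<longleftrightarrow> s = 0" by (metis emb_inj emb_zero)

lemma bit_sum0: assumes "(x::bit^'m) + y = 0" shows "x = y"
proof -
  have "x = x + (y + y)" by simp
  also have "\<dots> = (x + y) + y" by (simp add: add.assoc)
  also have "\<dots> = y" using assms by simp
  finally show ?thesis .
qed

lemma swap2: "((x::(bit^'m)^'b) + y) + x = y"
proof -
  have "(x + y) + x = x + (x + y)" by (rule add.commute)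
  then show ?thesis by simp
qed

locale LA =
  fixes g :: "'b::finite \<Rightarrow> (bit^'m::finite \<Rightarrow> bit^'m)"
    and U W W1 W2 :: "((bit^'m)^'b) set"
  assumes b_gt1: "CARD('b) > 1"
    and m_ge4: "CARD('m) \<ge> 4"
    and g_bij: "\<And>i. bij (g i)"
    and zero: "parallel_map g 0 = 0"
    and diff4: "\<And>i. diff_uniform (g i) 4"
    and nhat0: "\<And>i. nhat (g i) = 0"
    and U_sub: "F2_subspace U" and U_dim: "card U = 2 ^ (CARD('m) * CARD('b) - 1)"
    and W1_sub: "F2_subspace W1" and W1U: "W1 \<subseteq> U"
    and W2_sub: "F2_subspace W2" and W2U: "W2 \<subseteq> U"
    and W_sub: "F2_subspace W"
    and nontriv: "\<not> trivial_partition (Lpart W)"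
    and maps: "maps_onto (parallel_map g) (LApart U W1 W2) (Lpart W)"
begin

abbreviation "G \<equiv> parallel_map g"

lemma G_nth[simp]: "G x $ j = g j (x $ j)" by (simp add: parallel_map_def)

lemma g0[simp]: "g j 0 = 0"
  using arg_cong[OF zero, of "\<lambda>v. v $ j"] by simp

lemma G0[simp]: "G 0 = 0" by (rule zero)

lemma G_inj: "inj G"
proof (rule injI)
  fix x y assume "G x = G y"
  then have "g j (x $ j) = g j (y $ j)" for j by (metis G_nth)
  then have "x $ j = y $ j" for j using g_bij by (metis bij_is_inj injD)
  then show "x = y" by (rule vec_eqI')
qed

lemma G_surj: "surj G"
proof -
  { fix y
    have "G (\<chi> j. inv (g j) (y $ j)) = y"
      using g_bij by (simp add: vec_eq_iff bij_is_surj surj_f_inv_f)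
    then have "y \<in> range G" by (metis rangeI) }
  then show ?thesis by auto
qed

lemma G_emb: "G (emb i s) = emb i (g i s)" by (simp add: vec_eq_iff)

lemma G_diff: "G (x + emb i d) + G x = emb i (dderiv (g i) d (x $ i))"
  by (simp add: vec_eq_iff dderiv_def)

lemma G_diff2: "G y + G (y + w) + (G (y + emb i s) + G (y + emb i s + w))
   = emb i (dderiv (g i) (w $ i) (y $ i + s) + dderiv (g i) (w $ i) (y $ i))"
proof (rule vec_eqI')
  fix j show "(G y + G (y + w) + (G (y + emb i s) + G (y + emb i s + w))) $ j
   = emb i (dderiv (g i) (w $ i) (y $ i + s) + dderiv (g i) (w $ i) (y $ i)) $ j"
    by (cases "j = i") (simp_all add: dderiv_def add_ac)
qed

lemma fin_le4: assumes "a \<noteq> 0" shows "card {x. dderiv (g i) a x = c} \<le> 4"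
proof -
  let ?S = "{card {x. dderiv (g i) a x = c} |a c. a \<noteq> 0}"
  have "?S \<subseteq> (\<lambda>(a,c). card {x. dderiv (g i) a x = c}) ` UNIV" by auto
  then have "finite ?S" by (rule finite_subset) simp
  then have "card {x. dderiv (g i) a x = c} \<le> Max ?S" using assms by (intro Max_ge) auto
  then show ?thesis using diff4[of i] unfolding diff_uniform_def diff_uniformity_def by simp
qed

lemma nhat_contra:
  assumes "a \<noteq> 0" "v \<noteq> 0" "\<forall>x. dot (dderiv (g i) a x) v = k" shows False
proof -
  let ?T = "\<lambda>a. {v. v \<noteq> 0 \<and> (\<exists>k. \<forall>x. dot (dderiv (g i) a x) v = k)}"
  let ?S = "{card (?T a) | a. a \<noteq> 0}"
  have "?S \<subseteq> (\<lambda>a. card (?T a)) ` UNIV" by auto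
  then have "finite ?S" by (rule finite_subset) simp
  then have "card (?T a) \<le> Max ?S" using assms by (intro Max_ge) auto
  then have "card (?T a) = 0" using nhat0[of i] unfolding nhat_def by simp
  then have "?T a = {}" by simp
  then show False using assms by blast
qed

lemma count_le:
  assumes "a \<noteq> 0" "\<forall>s\<in>T. dderiv (g i) a s \<in> S"
  shows "card T \<le> 4 * card S"
proof -
  have "T \<subseteq> (\<Union>c\<in>S. {x. dderiv (g i) a x = c})" using assms by auto
  then have "card T \<le> card (\<Union>c\<in>S. {x. dderiv (g i) a x = c})" by (intro card_mono) auto
  also have "\<dots> \<le> (\<Sum>c\<in>S. card {x. dderiv (g i) a x = c})" by (rule card_UN_le) simp
  also have "\<dots> \<le> (\<Sum>c\<in>S. 4)" by (rule sum_mono) (use fin_le4[OF assms(1)] in auto)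
  finally show ?thesis by simp
qed

lemma dd_nz: assumes "a \<noteq> 0" shows "dderiv (g i) a s \<noteq> 0"
proof
  assume "dderiv (g i) a s = 0"
  then have "g i (s + a) = g i s" unfolding dderiv_def by (rule bit_sum0)
  then have "s + a = s" using g_bij[of i] by (simp add: bij_is_inj inj_eq)
  then show False using assms by (metis add_cancel_right_right)
qed

lemma cardV: "CARD((bit^'m)^'b) = 2 ^ (CARD('m) * CARD('b))"
  by (simp add: card_bit power_mult)

lemma U_half_card: "2 * card U = CARD((bit^'m)^'b)"
proof -
  have "CARD('m) * CARD('b) > 0" by simp
  then show ?thesis unfolding cardV U_dim by (metis Suc_diff_1 power_Suc)
qed

lemma U_half: "u \<notin> U \<Longrightarrow> u' \<notin> U \<Longrightarrow> u + u' \<in> U"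
  by (rule half_sub[OF _ U_sub U_half_card]) simp_all

lemma U_ne: "U \<noteq> UNIV"
proof
  assume "U = UNIV"
  then have "2 * CARD((bit^'m)^'b) = CARD((bit^'m)^'b)" using U_half_card by simp
  then show False by simp
qed

definition "vb = (SOME x. x \<notin> U)"
lemma vb: "vb \<notin> U" unfolding vb_def using U_ne by (metis (mono_tags, lifting) UNIV_eq_I someI_ex)

definition "sim x y \<longleftrightarrow> (x \<in> U \<and> y \<in> U \<and> x + y \<in> W1) \<or> (x \<notin> U \<and> y \<notin> U \<and> x + y \<in> W2)"

lemma P_eq: "LApart U W1 W2 = {coset W1 v | v. v \<in> U} \<union> {coset W2 (vb + v) | v. v \<in> U}"
  unfolding LApart_def Let_def vb_def by simp

lemma maps': "(\<lambda>X. G ` X) ` ({coset W1 v | v. v \<in> U} \<union> {coset W2 (vb + v) | v. v \<in> U}) = {coset W v | v. True}"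
  using maps unfolding maps_onto_def P_eq Lpart_def .

lemma simW: assumes "sim x y" shows "G x + G y \<in> W"
proof -
  obtain X where X: "X \<in> {coset W1 v | v. v \<in> U} \<union> {coset W2 (vb + v) | v. v \<in> U}" "x \<in> X" "y \<in> X"
  proof (cases "x \<in> U \<and> y \<in> U \<and> x + y \<in> W1")
    case True
    have "x \<in> coset W1 x" unfolding coset_def using sub_zero[OF W1_sub] by force
    moreover have "y \<in> coset W1 x" unfolding coset_def using True
      by (intro image_eqI[of _ _ "x + y"]) (simp_all add: swap2)
    ultimately show ?thesis using that True by blast
  next
    case False
    then have F: "x \<notin> U" "y \<notin> U" "x + y \<in> W2" using assms unfolding sim_def by auto
    have v: "vb + x \<in> U" using U_half[OF vb F(1)] .
    have e: "vb + (vb + x) = x" by simp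
    have "x \<in> coset W2 (vb + (vb + x))" unfolding coset_def e using sub_zero[OF W2_sub] by force
    moreover have "y \<in> coset W2 (vb + (vb + x))" unfolding coset_def e using F
      by (intro image_eqI[of _ _ "x + y"]) (simp_all add: swap2)
    ultimately show ?thesis using that v by blast
  qed
  then have "G ` X \<in> {coset W v | v. True}" using maps' by blast
  then obtain u where u: "G ` X = coset W u" by auto
  obtain w1 where w1: "w1 \<in> W" "G x = w1 + u" using u X(2) unfolding coset_def by blast
  obtain w2 where w2: "w2 \<in> W" "G y = w2 + u" using u X(3) unfolding coset_def by blast
  have "G x + G y = w1 + w2" using w1 w2 by (simp add: algebra_simps)
  then show ?thesis using sub_add[OF W_sub w1(1) w2(1)] by simp
qed

lemma Wsim: assumes "G x + G y \<in> W" shows "sim x y"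
proof -
  have "coset W (G x) \<in> {coset W v | v. True}" by auto
  then obtain X where X: "X \<in> {coset W1 v | v. v \<in> U} \<union> {coset W2 (vb + v) | v. v \<in> U}"
    "G ` X = coset W (G x)" using maps' by (metis (no_types, lifting) imageE)
  have "G x \<in> coset W (G x)" unfolding coset_def using sub_zero[OF W_sub] by force
  then have xX: "x \<in> X" using X(2) G_inj by (metis imageE inj_eq)
  have "G y \<in> coset W (G x)" unfolding coset_def using assms
    by (intro image_eqI[of _ _ "G x + G y"]) (simp_all add: swap2)
  then have yX: "y \<in> X" using X(2) G_inj by (metis imageE inj_eq)
  show ?thesis
  proof (cases "X \<in> {coset W1 v | v. v \<in> U}")
    case True
    then obtain v where v: "v \<in> U" "X = coset W1 v" by auto
    obtain p where p: "p \<in> W1" "x = p + v" using xX v unfolding coset_def by auto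
    obtain q where q: "q \<in> W1" "y = q + v" using yX v unfolding coset_def by auto
    have "x \<in> U" using p v W1U sub_add[OF U_sub] by auto
    moreover have "y \<in> U" using q v W1U sub_add[OF U_sub] by auto
    moreover have "x + y = p + q" using p q by (simp add: algebra_simps)
    ultimately show ?thesis using sub_add[OF W1_sub p(1) q(1)] unfolding sim_def by simp
  next
    case False
    then obtain v where v: "v \<in> U" "X = coset W2 (vb + v)" using X(1) by auto
    obtain p where p: "p \<in> W2" "x = p + (vb + v)" using xX v unfolding coset_def by auto
    obtain q where q: "q \<in> W2" "y = q + (vb + v)" using yX v unfolding coset_def by auto
    have nU: "z \<notin> U" if "r \<in> W2" "z = r + (vb + v)" for r z
    proof
      assume "z \<in> U"
      have "r + v \<in> U" using that W2U v sub_add[OF U_sub] by auto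
      then have "z + (r + v) \<in> U" using sub_add[OF U_sub \<open>z \<in> U\<close>] by blast
      moreover have "z + (r + v) = vb" using that by (simp add: algebra_simps)
      ultimately show False using vb by simp
    qed
    have "x + y = p + q" using p q by (simp add: algebra_simps)
    then show ?thesis using sub_add[OF W2_sub p(1) q(1)] nU[OF p] nU[OF q] unfolding sim_def by simp
  qed
qed

lemma sim_iff: "sim x y \<longleftrightarrow> G x + G y \<in> W" using simW Wsim by blast


lemma sub_emb: "F2_subspace S \<Longrightarrow> F2_subspace {d. emb i d \<in> S}"
  unfolding F2_subspace_def by (simp add: emb_add)

lemma notU_add: "x \<notin> U \<Longrightarrow> u \<in> U \<Longrightarrow> x + u \<notin> U"
proof
  assume "x \<notin> U" "u \<in> U" "x + u \<in> U"
  then have "(x + u) + u \<in> U" using sub_add[OF U_sub] by blast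
  then show False using \<open>x \<notin> U\<close> by (simp add: add.assoc)
qed

definition "A i = {d. emb i d \<in> W}"
definition "Ui i = {d. emb i d \<in> U}"
definition "A1 i = {d. emb i d \<in> W1}"
definition "A2 i = {d. emb i d \<in> W2}"

lemma cardVm: "CARD(bit^'m) \<ge> 16"
proof -
  have "(2::nat) ^ 4 \<le> 2 ^ CARD('m)" using m_ge4 by (intro power_increasing) auto
  then show ?thesis by (simp add: card_bit)
qed

lemma Ui_big: "CARD(bit^'m) \<le> 2 * card (Ui i)"
proof (cases "Ui i = UNIV")
  case True then show ?thesis by simp
next
  case False
  then obtain s0 where s0: "s0 \<notin> Ui i" by auto
  have "(\<lambda>d. d + s0) ` (UNIV - Ui i) \<subseteq> Ui i"
  proof
    fix z assume "z \<in> (\<lambda>d. d + s0) ` (UNIV - Ui i)"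
    then obtain d where d: "d \<notin> Ui i" "z = d + s0" by auto
    have "emb i d + emb i s0 \<in> U" using U_half d s0 unfolding Ui_def by simp
    then show "z \<in> Ui i" using d unfolding Ui_def by (simp add: emb_add)
  qed
  then have "card (UNIV - Ui i) \<le> card (Ui i)"
    using card_mono[of "Ui i"] card_transl[of s0 "UNIV - Ui i"] by (metis finite)
  moreover have "card (UNIV - Ui i) = CARD(bit^'m) - card (Ui i)" by (simp add: card_Diff_subset)
  moreover have "card (Ui i) \<le> CARD(bit^'m)" by (rule card_mono) auto
  ultimately show ?thesis by linarith
qed

lemma lemC:
  assumes a: "a \<noteq> 0" and a1: "emb i a \<in> W1" and a2: "emb i a \<in> W2" and nU: "A i \<noteq> UNIV"
  shows False
proof -
  have AS: "F2_subspace (A i)" unfolding A_def by (rule sub_emb[OF W_sub])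
  have "dderiv (g i) a s \<in> A i - {0}" for s
  proof -
    let ?x = "emb i s"
    have "sim (?x + emb i a) ?x"
    proof (cases "?x \<in> U")
      case True
      then have "?x + emb i a \<in> U" using a1 W1U sub_add[OF U_sub] by blast
      then show ?thesis using True a1 unfolding sim_def by (simp add: add_ac)
    next
      case False
      then have "?x + emb i a \<notin> U" using a1 W1U notU_add by blast
      then show ?thesis using False a2 unfolding sim_def by (simp add: add_ac)
    qed
    then have "G (?x + emb i a) + G ?x \<in> W" by (rule simW)
    then have "dderiv (g i) a s \<in> A i" unfolding G_diff A_def by simp
    then show ?thesis using dd_nz[OF a] by simp
  qed
  then have "card (UNIV :: (bit^'m) set) \<le> 4 * card (A i - {0})"
    using count_le[OF a, where T=UNIV and S="A i - {0}" and i=i] by blast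
  moreover have "card (A i - {0}) + 1 = card (A i)"
    using sub_zero[OF AS] card_Diff_singleton[of 0 "A i"] card_gt_0_iff[of "A i"] by auto
  ultimately have "CARD(bit^'m) < 4 * card (A i)" by linarith
  then obtain v where v: "v \<noteq> 0" "\<forall>y\<in>A i. dot y v = 0" using hyper[OF AS nU] by blast
  have "\<forall>x. dot (dderiv (g i) a x) v = 0" using v \<open>\<And>s. dderiv (g i) a s \<in> A i - {0}\<close> by blast
  then show False using nhat_contra[OF a v(1)] by blast
qed

lemma to_A1: assumes "g i t \<in> A i" shows "emb i t \<in> W1"
proof -
  have "G 0 + G (emb i t) \<in> W" using assms unfolding A_def G_emb by simp
  then have "sim 0 (emb i t)" by (rule Wsim)
  then show ?thesis using sub_zero[OF U_sub] unfolding sim_def by simp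
qed

lemma A_triv: "A i = {0} \<or> A i = UNIV"
proof (rule ccontr)
  assume "\<not> (A i = {0} \<or> A i = UNIV)"
  then have n0: "A i \<noteq> {0}" and nU: "A i \<noteq> UNIV" by auto
  have AS: "F2_subspace (A i)" unfolding A_def by (rule sub_emb[OF W_sub])
  obtain \<alpha> where al: "\<alpha> \<in> A i" "\<alpha> \<noteq> 0" using n0 sub_zero[OF AS] by blast
  have ginv: "g i (inv (g i) z) = z" for z using g_bij[of i] by (simp add: bij_is_surj surj_f_inv_f)
  define t where "t = inv (g i) \<alpha>"
  have gt: "g i t = \<alpha>" unfolding t_def by (rule ginv)
  have t0: "t \<noteq> 0" using gt al by auto
  have t1: "emb i t \<in> W1" using to_A1 gt al by simp
  show False
  proof (cases "\<exists>x. x $ i = 0 \<and> x \<notin> U")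
    case True
    then obtain x where x: "x $ i = 0" "x \<notin> U" by blast
    have "G (x + emb i t) + G x \<in> W" unfolding G_diff using al gt x unfolding A_def dderiv_def by simp
    then have "sim (x + emb i t) x" by (rule Wsim)
    then have "emb i t \<in> W2" using x unfolding sim_def by (simp add: add_ac)
    then show False using lemC[OF t0 t1 _ nU] by simp
  next
    case False
    then have hU: "x $ i = 0 \<Longrightarrow> x \<in> U" for x by blast
    have Uchar: "x \<in> U \<longleftrightarrow> emb i (x $ i) \<in> U" for x
    proof -
      have "(x + emb i (x $ i)) $ i = 0" by simp
      then have x': "x + emb i (x $ i) \<in> U" by (rule hU)
      show ?thesis
      proof
        assume "x \<in> U" then show "emb i (x $ i) \<in> U" using sub_add[OF U_sub _ x'] by fastforce
      next
        assume "emb i (x $ i) \<in> U" then show "x \<in> U" using sub_add[OF U_sub x'] by (fastforce simp: add.assoc)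
      qed
    qed
    define s0 where "s0 = vb $ i"
    have s0: "s0 \<notin> Ui i" using vb Uchar[of vb] unfolding s0_def Ui_def by simp
    have A12: "A1 i \<inter> A2 i \<subseteq> {0}"
    proof
      fix a assume "a \<in> A1 i \<inter> A2 i"
      then show "a \<in> {0}" using lemC[OF _ _ _ nU, of a] unfolding A1_def A2_def by auto
    qed
    have A1S: "F2_subspace (A1 i)" unfolding A1_def by (rule sub_emb[OF W1_sub])
    have A2S: "F2_subspace (A2 i)" unfolding A2_def by (rule sub_emb[OF W2_sub])
    have UiS: "F2_subspace (Ui i)" unfolding Ui_def by (rule sub_emb[OF U_sub])
    have c1: "card (A i) \<le> card (A1 i)"
    proof (rule card_inj_on_le)
      show "inj_on (inv (g i)) (A i)" by (rule inj_on_inv_into) (use g_bij[of i] in \<open>simp add: bij_is_surj\<close>)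
      show "inv (g i) ` A i \<subseteq> A1 i" using to_A1 ginv unfolding A1_def by auto
    qed simp
    have c2: "card (A i) \<le> card (A2 i)"
    proof (rule card_inj_on_le)
      show "inj_on (\<lambda>\<alpha>. s0 + inv (g i) (g i s0 + \<alpha>)) (A i)"
      proof (rule inj_onI)
        fix x y assume "s0 + inv (g i) (g i s0 + x) = s0 + inv (g i) (g i s0 + y)"
        then have "inv (g i) (g i s0 + x) = inv (g i) (g i s0 + y)" by simp
        then have "g i (inv (g i) (g i s0 + x)) = g i (inv (g i) (g i s0 + y))" by simp
        then have "g i s0 + x = g i s0 + y" by (simp only: ginv)
        then show "x = y" by simp
      qed
      show "(\<lambda>\<alpha>. s0 + inv (g i) (g i s0 + \<alpha>)) ` A i \<subseteq> A2 i"
      proof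
        fix z assume "z \<in> (\<lambda>\<alpha>. s0 + inv (g i) (g i s0 + \<alpha>)) ` A i"
        then obtain \<beta> where b: "\<beta> \<in> A i" "z = s0 + inv (g i) (g i s0 + \<beta>)" by auto
        define u where "u = inv (g i) (g i s0 + \<beta>)"
        have gu: "g i u = g i s0 + \<beta>" unfolding u_def by (rule ginv)
        have "G (emb i s0) + G (emb i u) = emb i \<beta>" unfolding G_emb gu by (simp add: emb_add[symmetric])
        then have "sim (emb i s0) (emb i u)" using b(1) unfolding A_def by (intro Wsim) simp
        moreover have "emb i s0 \<notin> U" using s0 unfolding Ui_def by simp
        ultimately have "emb i s0 + emb i u \<in> W2" unfolding sim_def by simp
        then show "z \<in> A2 i" unfolding A2_def b(2) u_def[symmetric] by (simp add: emb_add)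
      qed
    qed simp
    have c3: "card (A1 i) * card (A2 i) \<le> card (Ui i)"
    proof -
      have "card (A1 i \<times> A2 i) \<le> card (Ui i)"
      proof (rule card_inj_on_le)
        show "inj_on (\<lambda>(p, q). p + q) (A1 i \<times> A2 i)"
        proof (rule inj_onI, clarify)
          fix p q p' q' assume h: "p \<in> A1 i" "q \<in> A2 i" "p' \<in> A1 i" "q' \<in> A2 i" "p + q = p' + q'"
          have "(p + p') + (q + q') = (p + q) + (p' + q')" by (simp add: add_ac)
          also have "\<dots> = 0" using h(5) by simp
          finally have e: "p + p' = q + q'" by (rule bit_sum0)
          have "p + p' \<in> A1 i" using sub_add[OF A1S h(1) h(3)] .
          moreover have "q + q' \<in> A2 i" using sub_add[OF A2S h(2) h(4)] .
          ultimately have "p + p' = 0" using A12 e by auto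
          then have "p = p'" by (rule bit_sum0)
          then show "p = p' \<and> q = q'" using h(5) by simp
        qed
        show "(\<lambda>(p, q). p + q) ` (A1 i \<times> A2 i) \<subseteq> Ui i"
          using W1U W2U sub_add[OF UiS] unfolding A1_def A2_def Ui_def by auto
      qed simp
      then show ?thesis by (simp add: card_cartesian_product)
    qed
    have c4: "2 * card (Ui i) \<le> CARD(bit^'m)"
    proof -
      have disj: "Ui i \<inter> (\<lambda>d. d + s0) ` Ui i = {}"
      proof (rule ccontr)
        assume "Ui i \<inter> (\<lambda>d. d + s0) ` Ui i \<noteq> {}"
        then obtain d where d: "d \<in> Ui i" "d + s0 \<in> Ui i" by auto
        have "d + (d + s0) \<in> Ui i" using sub_add[OF UiS d] .
        then show False using s0 by simp
      qed
      have "card (Ui i \<union> (\<lambda>d. d + s0) ` Ui i) = 2 * card (Ui i)"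
        using card_Un_disjoint[OF _ _ disj] card_transl[of s0 "Ui i"] by simp
      moreover have "card (Ui i \<union> (\<lambda>d. d + s0) ` Ui i) \<le> CARD(bit^'m)" by (rule card_mono) auto
      ultimately show ?thesis by simp
    qed
    have "dderiv (g i) t s \<in> A i - {0}" if s: "s \<in> Ui i" for s
    proof -
      let ?x = "emb i s"
      have xU: "?x \<in> U" using s unfolding Ui_def by simp
      then have "?x + emb i t \<in> U" using t1 W1U sub_add[OF U_sub] by blast
      then have "sim (?x + emb i t) ?x" using xU t1 unfolding sim_def by (simp add: add_ac)
      then have "G (?x + emb i t) + G ?x \<in> W" by (rule simW)
      then have "dderiv (g i) t s \<in> A i" unfolding G_diff A_def by simp
      then show ?thesis using dd_nz[OF t0] by simp
    qed
    then have c5: "card (Ui i) \<le> 4 * card (A i - {0})" using count_le[OF t0] by blast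
    have c6: "card (A i - {0}) + 1 = card (A i)"
      using sub_zero[OF AS] card_Diff_singleton[of 0 "A i"] card_gt_0_iff[of "A i"] by auto
    have c7: "CARD(bit^'m) \<le> 2 * card (Ui i)" by (rule Ui_big)
    have c8: "card (A i) * card (A i) \<le> card (Ui i)" using c1 c2 c3 mult_le_mono by (meson le_trans)
    define c where "c = card (A i)"
    define N where "N = card (Ui i)"
    have "N \<ge> 8" using c7 cardVm unfolding N_def by linarith
    have "N + 4 \<le> 4 * c" using c5 c6 unfolding N_def c_def by linarith
    have "c * c \<le> N" using c8 unfolding N_def c_def .
    then have "c * c < 4 * c" using \<open>N + 4 \<le> 4 * c\<close> by linarith
    then have "c < 4" by simp
    then have "c = 0 \<or> c = 1 \<or> c = 2 \<or> c = 3" by arith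
    then show False using \<open>c * c \<le> N\<close> \<open>N + 4 \<le> 4 * c\<close> \<open>N \<ge> 8\<close> by auto
  qed
qed


definition "I = {i. A i = UNIV}"
definition "WI = {v::(bit^'m)^'b. \<forall>i. i \<notin> I \<longrightarrow> v $ i = 0}"

lemma A1_full: "A i = UNIV \<Longrightarrow> emb i e \<in> W1"
  using to_A1[of i e] by simp

lemma A2_full: assumes "A i = UNIV" shows "emb i e \<in> W2"
proof -
  have "G (vb + emb i e) + G vb \<in> W" unfolding G_diff using assms unfolding A_def by auto
  then have "sim (vb + emb i e) vb" by (rule Wsim)
  then show ?thesis using vb unfolding sim_def by (simp add: add_ac)
qed

lemma sub_sum: assumes S: "F2_subspace S" shows "finite J \<Longrightarrow> (\<forall>j\<in>J. f j \<in> S) \<Longrightarrow> sum f J \<in> S"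
  by (induction J rule: finite_induct) (auto simp: sub_zero[OF S] sub_add[OF S])

lemma WI_decomp: assumes "v \<in> WI" shows "v = (\<Sum>i\<in>I. emb i (v $ i))"
proof (rule vec_eqI')
  fix k
  have "(\<Sum>i\<in>I. emb i (v $ i)) $ k = (\<Sum>i\<in>I. emb i (v $ i) $ k)" by (rule sum_component)
  also have "\<dots> = (\<Sum>i\<in>I. if k = i then v $ i else 0)" by simp
  also have "\<dots> = v $ k" using assms unfolding WI_def by (auto simp: sum.delta)
  finally show "v $ k = (\<Sum>i\<in>I. emb i (v $ i)) $ k" by simp
qed

lemma WI_sub: assumes S: "F2_subspace S" and h: "\<And>i e. i \<in> I \<Longrightarrow> emb i e \<in> S" shows "WI \<subseteq> S"
proof
  fix v assume "v \<in> WI"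
  then have "v = (\<Sum>i\<in>I. emb i (v $ i))" by (rule WI_decomp)
  moreover have "(\<Sum>i\<in>I. emb i (v $ i)) \<in> S" using h by (intro sub_sum[OF S]) auto
  ultimately show "v \<in> S" by simp
qed

lemma const_lemma:
  assumes wi: "w $ i \<noteq> 0" and Ai: "A i = {0}"
    and h: "\<And>s. s \<in> Ui i \<Longrightarrow> sim y (y + w) \<and> sim (y + emb i s) (y + emb i s + w)"
  shows False
proof -
  let ?d = "dderiv (g i) (w $ i)"
  have "?d s' = ?d (y $ i)" if s'in: "s' \<in> (\<lambda>s. y $ i + s) ` Ui i" for s'
  proof -
    obtain s where s: "s \<in> Ui i" "s' = y $ i + s" using s'in by auto
    have "G y + G (y + w) + (G (y + emb i s) + G (y + emb i s + w)) \<in> W"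
      using h[OF s(1)] simW sub_add[OF W_sub] by blast
    then have "?d (y $ i + s) + ?d (y $ i) \<in> A i" unfolding G_diff2 A_def by simp
    then have "?d (y $ i + s) + ?d (y $ i) = 0" using Ai by simp
    then show ?thesis using s by (simp add: bit_sum0)
  qed
  then have "card ((\<lambda>s. y $ i + s) ` Ui i) \<le> 4 * card {?d (y $ i)}"
    using count_le[OF wi, where S="{?d (y $ i)}" and i=i] by blast
  moreover have "card ((\<lambda>s. y $ i + s) ` Ui i) = card (Ui i)" by (rule card_image) (simp add: inj_on_def)
  moreover have "card (Ui i) \<ge> 8" using Ui_big[of i] cardVm by linarith
  ultimately show False by simp
qed

lemma W1_WI: "W1 \<subseteq> WI"
proof
  fix w assume w: "w \<in> W1"
  show "w \<in> WI" unfolding WI_def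
  proof (intro CollectI allI impI, rule ccontr)
    fix i assume "i \<notin> I" "w $ i \<noteq> 0"
    then have Ai: "A i = {0}" using A_triv[of i] unfolding I_def by auto
    have wU: "w \<in> U" using w W1U by auto
    show False
    proof (rule const_lemma[OF \<open>w $ i \<noteq> 0\<close> Ai, of 0])
      fix s assume s: "s \<in> Ui i"
      have eU: "emb i s \<in> U" using s unfolding Ui_def by simp
      have "emb i s + w \<in> U" using sub_add[OF U_sub eU wU] .
      then show "sim 0 (0 + w) \<and> sim (0 + emb i s) (0 + emb i s + w)"
        using eU wU w sub_zero[OF U_sub] unfolding sim_def by simp
    qed
  qed
qed

lemma W2_WI: "W2 \<subseteq> WI"
proof
  fix w assume w: "w \<in> W2"
  show "w \<in> WI" unfolding WI_def
  proof (intro CollectI allI impI, rule ccontr)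
    fix i assume "i \<notin> I" "w $ i \<noteq> 0"
    then have Ai: "A i = {0}" using A_triv[of i] unfolding I_def by auto
    have wU: "w \<in> U" using w W2U by auto
    show False
    proof (rule const_lemma[OF \<open>w $ i \<noteq> 0\<close> Ai, of vb])
      fix s assume s: "s \<in> Ui i"
      have eU: "emb i s \<in> U" using s unfolding Ui_def by simp
      have x: "vb + emb i s \<notin> U" using notU_add[OF vb eU] .
      have "vb + emb i s + w \<notin> U" using notU_add[OF x wU] .
      moreover have "vb + w \<notin> U" using notU_add[OF vb wU] .
      ultimately show "sim vb (vb + w) \<and> sim (vb + emb i s) (vb + emb i s + w)"
        using x vb w unfolding sim_def by (simp add: add_ac)
    qed
  qed
qed

lemma card_W1: "card W1 = card W"
proof -
  have "G ` W1 = W"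
  proof
    show "G ` W1 \<subseteq> W"
    proof
      fix y assume "y \<in> G ` W1"
      then obtain x where x: "x \<in> W1" "y = G x" by auto
      have "sim 0 x" using x W1U sub_zero[OF U_sub] unfolding sim_def by auto
      then show "y \<in> W" using simW x by fastforce
    qed
  next
    show "W \<subseteq> G ` W1"
    proof
      fix y assume y: "y \<in> W"
      obtain x where x: "y = G x" using G_surj by (metis surjD)
      have "sim 0 x" using y x by (intro Wsim) simp
      then have "x \<in> W1" using sub_zero[OF U_sub] unfolding sim_def by simp
      then show "y \<in> G ` W1" using x by simp
    qed
  qed
  moreover have "card (G ` W1) = card W1" by (rule card_image[OF inj_on_subset[OF G_inj subset_UNIV]])
  ultimately show ?thesis by simp
qed

lemma card_W2: "card W2 = card W"
proof -
  have e1: "{x. sim vb x} = (\<lambda>w. w + vb) ` W2"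
  proof (intro set_eqI iffI)
    fix x assume "x \<in> {x. sim vb x}"
    then have "vb + x \<in> W2" using vb unfolding sim_def by simp
    moreover have "x = (vb + x) + vb" by (simp add: add_ac)
    ultimately show "x \<in> (\<lambda>w. w + vb) ` W2" by blast
  next
    fix x assume "x \<in> (\<lambda>w. w + vb) ` W2"
    then obtain w where w: "w \<in> W2" "x = w + vb" by auto
    have "x \<notin> U" using notU_add[OF vb, of w] w W2U by (auto simp: add.commute)
    then show "x \<in> {x. sim vb x}" using vb w unfolding sim_def by (simp add: add_ac)
  qed
  have e2: "G ` {x. sim vb x} = (\<lambda>z. z + G vb) ` W"
  proof (intro set_eqI iffI)
    fix y assume "y \<in> G ` {x. sim vb x}"
    then obtain x where x: "sim vb x" "y = G x" by auto
    have "G vb + G x \<in> W" using simW[OF x(1)] .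
    moreover have "y = (G vb + G x) + G vb" using x by (simp add: add_ac)
    ultimately show "y \<in> (\<lambda>z. z + G vb) ` W" by blast
  next
    fix y assume "y \<in> (\<lambda>z. z + G vb) ` W"
    then obtain z where z: "z \<in> W" "y = z + G vb" by auto
    obtain x where x: "y = G x" using G_surj by (metis surjD)
    have "G vb + G x = z" using z x by (simp add: add_ac)
    then have "sim vb x" using z by (intro Wsim) simp
    then show "y \<in> G ` {x. sim vb x}" using x by simp
  qed
  have "card W2 = card {x. sim vb x}" unfolding e1 by (rule card_transl[symmetric])
  also have "\<dots> = card (G ` {x. sim vb x})" using card_image[OF inj_on_subset[OF G_inj subset_UNIV]] by simp
  also have "\<dots> = card W" unfolding e2 by (rule card_transl)
  finally show ?thesis .
qed

lemma eqs: "W1 = WI" "W = WI" "W2 = WI"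
proof -
  have s1: "WI \<subseteq> W"
  proof (rule WI_sub[OF W_sub])
    fix i e assume "i \<in> I"
    then have "e \<in> A i" unfolding I_def by simp
    then show "emb i e \<in> W" unfolding A_def by simp
  qed
  have s2: "WI \<subseteq> W1" by (rule WI_sub[OF W1_sub]) (simp add: I_def A1_full)
  have s3: "WI \<subseteq> W2" by (rule WI_sub[OF W2_sub]) (simp add: I_def A2_full)
  show "W1 = WI" using s2 W1_WI by blast
  then have "W1 \<subseteq> W" using s1 by simp
  then have "W1 = W" using card_W1 by (intro card_subset_eq) simp_all
  then show "W = WI" using \<open>W1 = WI\<close> by simp
  show "W2 = WI" using s3 W2_WI by blast
qed

lemma main: "is_wall W \<and> is_wall W1 \<and> W = W1 \<and> W1 = W2 \<and> linear_partition (LApart U W1 W2)"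
proof -
  have wall: "is_wall W"
    unfolding is_wall_def
  proof (intro exI[of _ I] conjI)
    show "I \<noteq> {}"
    proof
      assume "I = {}"
      have z: "v \<in> WI \<Longrightarrow> v = 0" for v using \<open>I = {}\<close> unfolding WI_def by (intro vec_eqI') simp
      have "0 \<in> WI" unfolding WI_def by simp
      then have "W = {0}" using z eqs(2) by blast
      then have cs: "coset W v = {v}" for v unfolding coset_def by simp
      have "Lpart W = {{x} | x. True}" by (simp only: Lpart_def cs)
      then show False using nontriv unfolding trivial_partition_def by simp
    qed
    show "I \<noteq> UNIV"
    proof
      assume "I = UNIV"
      then have W: "W = UNIV" using eqs(2) unfolding WI_def by auto
      have "coset W v = UNIV" for v unfolding W coset_def
      proof (intro set_eqI iffI)
        fix z show "z \<in> (\<lambda>w. w + v) ` UNIV" by (rule image_eqI[of _ _ "z + v"]) (simp_all add: add.assoc)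
      qed simp
      then have "Lpart W = {UNIV | v. True}" unfolding Lpart_def by presburger
      also have "{UNIV | v::(bit^'m)^'b. True} = {UNIV}" by blast
      finally have "Lpart W = {UNIV}" .
      then show False using nontriv unfolding trivial_partition_def by simp
    qed
    show "W = {v. \<forall>i. i \<notin> I \<longrightarrow> v $ i = 0}" using eqs(2) unfolding WI_def .
  qed
  have e1: "W = W1" "W1 = W2" using eqs by simp_all
  have "LApart U W1 W2 = Lpart W1"
  proof -
    have "LApart U W1 W2 = {coset W1 v | v. v \<in> U} \<union> {coset W1 (vb + v) | v. v \<in> U}"
      by (subst P_eq) (simp add: e1(2))
    also have "\<dots> = {coset W1 v | v. True}"
    proof (intro set_eqI iffI)
      fix X assume "X \<in> {coset W1 v | v. True}"
      then obtain v where v: "X = coset W1 v" by auto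
      show "X \<in> {coset W1 v | v. v \<in> U} \<union> {coset W1 (vb + v) | v. v \<in> U}"
      proof (cases "v \<in> U")
        case True then show ?thesis using v by blast
      next
        case False
        then have vv: "vb + v \<in> U" using U_half vb by blast
        have "X = coset W1 (vb + (vb + v))" using v by simp
        then have "X \<in> {coset W1 (vb + v) | v. v \<in> U}" using vv by blast
        then show ?thesis by (rule UnI2)
      qed
    next
      fix X assume "X \<in> {coset W1 v | v. v \<in> U} \<union> {coset W1 (vb + v) | v. v \<in> U}"
      then show "X \<in> {coset W1 v | v. True}" by blast
    qed
    finally show ?thesis unfolding Lpart_def .
  qed
  then have "linear_partition (LApart U W1 W2)" unfolding linear_partition_def using W1_sub by blast
  then show ?thesis using wall e1 by simp
qed

end

theorem lemma3p16:
  fixes g :: "'b::finite \<Rightarrow> (bit^'m::finite \<Rightarrow> bit^'m)"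
    and U W W1 W2 :: "((bit^'m)^'b) set"
  assumes b_gt1: "CARD('b) > 1"
    and m_ge4: "CARD('m) \<ge> 4"
    and g_bij: "\<And>i. bij (g i)"
    and zero: "parallel_map g 0 = 0"
    and diff4: "\<And>i. diff_uniform (g i) 4"
    and nhat0: "\<And>i. nhat (g i) = 0"
    and U_sub: "F2_subspace U" and U_dim: "card U = 2 ^ (CARD('m) * CARD('b) - 1)"
    and W1_sub: "F2_subspace W1" and W1U: "W1 \<subseteq> U"
    and W2_sub: "F2_subspace W2" and W2U: "W2 \<subseteq> U"
    and W_sub: "F2_subspace W"
    and nontriv: "\<not> trivial_partition (Lpart W)"
    and maps: "maps_onto (parallel_map g) (LApart U W1 W2) (Lpart W)"
  shows "is_wall W \<and> is_wall W1 \<and> W = W1 \<and> W1 = W2 \<and> linear_partition (LApart U W1 W2)"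
proof -
  interpret LA g U W W1 W2 by (rule LA.intro) (fact assms)+
  show ?thesis by (rule main)
qed

end
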